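(* Let $A\in\mathbb{R}^{m\times n}$ be semi-monotone (i.e. $A^{\dagger}\geq 0$). Let $A=M-N=U-V$ be two proper regular splittings of $A$ such that $R(M+U-A)=R(A)$ and $N(M+U-A)=N(A)$. Suppose all row sums of $U^{\dagger}$ and of $M^{\dagger}$ are positive. Then, with $H=U^{\dagger}VM^{\dagger}N$, $$\rho(H)\leq \min\{\rho(U^{\dagger}V),\rho(M^{\dagger}N)\}<1.$$
   Context: All matrices are real. $X^{\dagger}$ denotes the Moore–Penrose inverse of $X$, and $\rho(\cdot)$ the spectral radius. For a matrix $X$, $X\geq 0$ means that all entries of $X$ are nonnegative and at least one entry is positive; $X\geq Y$ means $X-Y\geq 0$. $R(X)$ and $N(X)$ denote range and null space. A splitting $A=U-V$ is proper if $R(U)=R(A)$ and $N(U)=N(A)$; it is a proper regular splitting if it is proper, $U^{\dagger}\geq 0$ and $V\geq 0$. *)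

theory Defs
  imports "Jordan_Normal_Form.Spectral_Radius"
begin

definition penrose :: "real mat \<Rightarrow> real mat \<Rightarrow> bool" where
  "penrose A X \<longleftrightarrow> X \<in> carrier_mat (dim_col A) (dim_row A) \<and>
     A * X * A = A \<and> X * A * X = X \<and>
     transpose_mat (A * X) = A * X \<and> transpose_mat (X * A) = X * A"

definition pinv :: "real mat \<Rightarrow> real mat" where
  "pinv A = (THE X. penrose A X)"

definition rho :: "real mat \<Rightarrow> real" where
  "rho X = spectral_radius (map_mat complex_of_real X)"

(* X \<ge> 0: all entries nonnegative and at least one entry positive *)
definition nonneg_mat :: "real mat \<Rightarrow> bool" where
  "nonneg_mat X \<longleftrightarrow> (\<forall>i<dim_row X. \<forall>j<dim_col X. X $$ (i,j) \<ge> 0) \<and>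
     (\<exists>i<dim_row X. \<exists>j<dim_col X. X $$ (i,j) > 0)"

definition range_mat :: "real mat \<Rightarrow> real vec set" where
  "range_mat X = {X *\<^sub>v y | y. y \<in> carrier_vec (dim_col X)}"

definition null_mat :: "real mat \<Rightarrow> real vec set" where
  "null_mat X = {x \<in> carrier_vec (dim_col X). X *\<^sub>v x = 0\<^sub>v (dim_row X)}"

definition semi_monotone :: "real mat \<Rightarrow> bool" where
  "semi_monotone A \<longleftrightarrow> nonneg_mat (pinv A)"

definition proper_splitting :: "real mat \<Rightarrow> real mat \<Rightarrow> real mat \<Rightarrow> bool" where
  "proper_splitting A U V \<longleftrightarrow>
     U \<in> carrier_mat (dim_row A) (dim_col A) \<and> V \<in> carrier_mat (dim_row A) (dim_col A) \<and>
     A = U - V \<and> range_mat U = range_mat A \<and> null_mat U = null_mat A"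

definition proper_regular_splitting :: "real mat \<Rightarrow> real mat \<Rightarrow> real mat \<Rightarrow> bool" where
  "proper_regular_splitting A U V \<longleftrightarrow>
     proper_splitting A U V \<and> nonneg_mat (pinv U) \<and> nonneg_mat V"

definition pos_row_sums :: "real mat \<Rightarrow> bool" where
  "pos_row_sums X \<longleftrightarrow> (\<forall>i<dim_row X. (\<Sum>j<dim_col X. X $$ (i,j)) > 0)"

end

theory Submission
  imports Defs
begin


lemma gen_inv_exists:
  fixes A :: "'a::field mat"
  assumes A: "A \<in> carrier_mat nr nc"
  shows "\<exists>G \<in> carrier_mat nc nr. A * G * A = A"
proof -
  obtain C where C: "gauss_jordan_single A = C" by auto
  note gj = gauss_jordan_single[OF A C]
  from gj(2) have Cc: "C \<in> carrier_mat nr nc" .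
  from gj(3) obtain f where pf: "pivot_fun C f nc"
    unfolding row_echelon_form_def using Cc by auto
  from gj(4) obtain P Q where PQ: "C = P * A" "P \<in> carrier_mat nr nr" "Q \<in> carrier_mat nr nr"
    "P * Q = 1\<^sub>m nr" "Q * P = 1\<^sub>m nr" by blast
  have dC: "dim_row C = nr" using Cc by auto
  note pd = pivot_funD[OF dC pf]
  define G0 :: "'a mat" where "G0 = mat nc nr (\<lambda>(j,i). if f i = j then 1 else 0)"
  have G0c: "G0 \<in> carrier_mat nc nr" unfolding G0_def by auto
  have CG0: "C * G0 = mat nr nr (\<lambda>(i,i'). if i = i' \<and> f i < nc then 1 else 0)"
  proof (rule eq_matI)
    fix i i' assume i: "i < dim_row (mat nr nr (\<lambda>(i,i'). if i = i' \<and> f i < nc then 1 else (0::'a)))"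
      and i': "i' < dim_col (mat nr nr (\<lambda>(i,i'). if i = i' \<and> f i < nc then 1 else (0::'a)))"
    hence i: "i < nr" and i': "i' < nr" by auto
    have "(C * G0) $$ (i,i') = (\<Sum>j\<in>{0..<nc}. C $$ (i,j) * (if f i' = j then 1 else 0))"
      using i i' Cc G0c unfolding G0_def by (auto simp: scalar_prod_def)
    also have "\<dots> = (\<Sum>j\<in>{0..<nc}. if f i' = j then C $$ (i,j) else 0)"
      by (rule sum.cong, auto)
    also have "\<dots> = (if f i' < nc then C $$ (i, f i') else 0)"
      by (simp add: sum.delta')
    also have "\<dots> = (if i = i' \<and> f i < nc then 1 else 0)"
      using pd(4)[OF i'] pd(5)[OF i'] i i' by auto
    finally show "(C * G0) $$ (i,i') = mat nr nr (\<lambda>(i,i'). if i = i' \<and> f i < nc then 1 else 0) $$ (i,i')"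
      using i i' by auto
  qed (insert Cc G0c, auto)
  have CGC: "C * G0 * C = C"
  proof (rule eq_matI)
    fix i k assume "i < dim_row C" "k < dim_col C"
    hence i: "i < nr" and k: "k < nc" using Cc by auto
    have "(C * G0 * C) $$ (i,k) = (\<Sum>i'\<in>{0..<nr}. (if i = i' \<and> f i < nc then 1 else 0) * C $$ (i',k))"
      unfolding CG0 using i k Cc by (auto simp: scalar_prod_def)
    also have "\<dots> = (\<Sum>i'\<in>{0..<nr}. if i = i' then (if f i < nc then C $$ (i',k) else 0) else 0)"
      by (rule sum.cong, auto)
    also have "\<dots> = (if f i < nc then C $$ (i,k) else 0)"
      using i by (simp add: sum.delta')
    also have "\<dots> = C $$ (i,k)"
      using pd(1)[OF i] pd(2)[OF i, of k] k by (cases "f i < nc", auto)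
    finally show "(C * G0 * C) $$ (i,k) = C $$ (i,k)" .
  qed (insert Cc G0c, auto)
  have QC: "Q * C = A" using PQ A by (simp add: assoc_mult_mat[symmetric, of Q nr nr P nr A nc] )
  show ?thesis
  proof (intro bexI[of _ "G0 * P"])
    show "G0 * P \<in> carrier_mat nc nr" using G0c PQ by auto
    have "A * (G0 * P) * A = Q * C * G0 * C"
      using A G0c PQ Cc QC by (simp add: assoc_mult_mat[of _ nr nc _ nr _ nc])
    also have "\<dots> = Q * (C * G0 * C)" using PQ Cc G0c by (simp add: assoc_mult_mat[of _ nr nr _ nr _ nc])
    finally show "A * (G0 * P) * A = A" using CGC QC by simp
  qed
qed



lemma tt_zero:
  fixes Y :: "real mat"
  assumes Y: "Y \<in> carrier_mat m n" and Z: "Y\<^sup>T * Y = 0\<^sub>m n n"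
  shows "Y = 0\<^sub>m m n"
proof (rule eq_matI)
  fix i j assume "i < dim_row (0\<^sub>m m n :: real mat)" "j < dim_col (0\<^sub>m m n :: real mat)"
  hence i: "i < m" and j: "j < n" by auto
  have "(Y\<^sup>T * Y) $$ (j,j) = (\<Sum>k\<in>{0..<m}. Y $$ (k,j) * Y $$ (k,j))"
    using Y j by (auto simp: scalar_prod_def)
  hence s: "(\<Sum>k\<in>{0..<m}. Y $$ (k,j) * Y $$ (k,j)) = 0" using Z j by simp
  have "\<forall>k\<in>{0..<m}. Y $$ (k,j) * Y $$ (k,j) = 0"
    using sum_nonneg_eq_0_iff[of "{0..<m}" "\<lambda>k. Y $$ (k,j) * Y $$ (k,j)"] s by auto
  thus "Y $$ (i,j) = 0\<^sub>m m n $$ (i,j)" using i j by auto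
qed (insert Y, auto)

lemma mat_diff_zero:
  fixes X Y :: "'a::ab_group_add mat"
  assumes "X \<in> carrier_mat m n" "Y \<in> carrier_mat m n" "X - Y = 0\<^sub>m m n"
  shows "X = Y"
proof (rule eq_matI)
  fix i j assume "i < dim_row Y" "j < dim_col Y"
  hence ij: "i < m" "j < n" using assms by auto
  have "(X - Y) $$ (i,j) = 0" using assms(3) ij by simp
  moreover have "dim_row Y = m" "dim_col Y = n" using assms by auto
  hence "(X - Y) $$ (i,j) = X $$ (i,j) - Y $$ (i,j)" using ij by simp
  ultimately show "X $$ (i,j) = Y $$ (i,j)" by simp
qed (insert assms, auto)

lemma inv13_exists:
  fixes A :: "real mat"
  assumes A: "A \<in> carrier_mat m n"
  shows "\<exists>X \<in> carrier_mat n m. A * X * A = A \<and> (A * X)\<^sup>T = A * X"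
proof -
  define S where "S = A\<^sup>T * A"
  have At: "A\<^sup>T \<in> carrier_mat n m" using A by auto
  have Sc: "S \<in> carrier_mat n n" unfolding S_def using A by auto
  have St: "S\<^sup>T = S" unfolding S_def using A by (simp add: transpose_mult[of _ n m _ n])
  obtain W where Wc: "W \<in> carrier_mat n n" and SWS: "S * W * S = S"
    using gen_inv_exists[OF Sc] by auto
  have Wt: "W\<^sup>T \<in> carrier_mat n n" using Wc by auto
  have SWtS: "S * W\<^sup>T * S = S"
  proof -
    have "(S * W * S)\<^sup>T = S\<^sup>T * W\<^sup>T * S\<^sup>T"
      using Sc Wc by (simp add: transpose_mult[of _ n n _ n] assoc_mult_mat[of _ n n _ n _ n])
    thus ?thesis using SWS St by simp
  qed
  define Z where "Z = W\<^sup>T * S - 1\<^sub>m n"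
  have Zc: "Z \<in> carrier_mat n n" unfolding Z_def using Wt Sc by auto
  have SZ: "S * Z = 0\<^sub>m n n"
    unfolding Z_def using Sc Wt SWtS
    by (simp add: mult_minus_distrib_mat[of _ n n _ n] assoc_mult_mat[of _ n n _ n _ n])
  have AZc: "A * Z \<in> carrier_mat m n" using A Zc by auto
  have "(A * Z)\<^sup>T * (A * Z) = Z\<^sup>T * (S * Z)"
    unfolding S_def using A Zc At
    by (simp add: transpose_mult[of _ m n _ n] assoc_mult_mat[of _ n m _ n _ n] assoc_mult_mat[of _ n n _ m _ n])
  also have "\<dots> = 0\<^sub>m n n" using SZ Zc by simp
  finally have "A * Z = 0\<^sub>m m n" using tt_zero[OF AZc] by simp
  hence "A * W\<^sup>T * S - A = 0\<^sub>m m n"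
    unfolding Z_def using A Wt Sc
    by (simp add: mult_minus_distrib_mat[of _ m n _ n] assoc_mult_mat[of _ m n _ n _ n])
  hence AWS: "A * W\<^sup>T * S = A" using mat_diff_zero[of "A * W\<^sup>T * S" m n A] A Wt Sc by auto
  hence "(A * W\<^sup>T * S)\<^sup>T = A\<^sup>T" by simp
  moreover have "(A * W\<^sup>T * S)\<^sup>T = S\<^sup>T * (A * W\<^sup>T)\<^sup>T"
    using A Wt Sc by (intro transpose_mult[of _ m n], auto)
  moreover have "(A * W\<^sup>T)\<^sup>T = W * A\<^sup>T"
    using A Wt by (subst transpose_mult[of _ m n _ n], auto)
  ultimately have SWA0: "S * (W * A\<^sup>T) = A\<^sup>T" using St by simp
  define X where "X = W * A\<^sup>T"
  have Xc: "X \<in> carrier_mat n m" unfolding X_def using Wc At by auto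
  have N: "A\<^sup>T * A * X = A\<^sup>T" using SWA0 unfolding X_def S_def .
  define Y where "Y = A * X * A - A"
  have Yc: "Y \<in> carrier_mat m n" unfolding Y_def using A Xc by auto
  have AtY: "A\<^sup>T * Y = 0\<^sub>m n n"
  proof -
    have "A\<^sup>T * Y = A\<^sup>T * (A * X * A) - A\<^sup>T * A"
      unfolding Y_def using A Xc At by (simp add: mult_minus_distrib_mat[of _ n m _ n])
    also have "A\<^sup>T * (A * X * A) = A\<^sup>T * A * X * A"
      using A Xc At by (simp add: assoc_mult_mat[of _ n m _ n _ m] assoc_mult_mat[of _ n m _ m _ n])
    also have "\<dots> = A\<^sup>T * A" using N by simp
    finally show ?thesis using A At by simp
  qed
  have AXAc: "A * X * A \<in> carrier_mat m n" using A Xc by auto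
  have "Y\<^sup>T = (A * X * A)\<^sup>T - A\<^sup>T" unfolding Y_def by (rule transpose_minus[OF AXAc A])
  hence "Y\<^sup>T * Y = (A * X * A)\<^sup>T * Y - A\<^sup>T * Y"
    using A AXAc Yc by (simp add: minus_mult_distrib_mat[of _ n m _ _ n])
  also have "(A * X * A)\<^sup>T * Y = (X * A)\<^sup>T * (A\<^sup>T * Y)"
  proof -
    have "A * X * A = A * (X * A)" using A Xc by (simp add: assoc_mult_mat[of _ m n _ m _ n])
    hence "(A * X * A)\<^sup>T = (X * A)\<^sup>T * A\<^sup>T" using A Xc by (simp add: transpose_mult[of A m n _ n])
    thus ?thesis using A Xc Yc by (simp add: assoc_mult_mat[of _ n n _ m _ n])
  qed
  finally have "Y\<^sup>T * Y = 0\<^sub>m n n" using AtY A Xc by simp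
  hence Y0: "Y = 0\<^sub>m m n" using tt_zero[OF Yc] by simp
  have AXA: "A * X * A = A"
    using mat_diff_zero[of "A*X*A" m n A] Y0 AXAc A unfolding Y_def by auto
  have AXc: "A * X \<in> carrier_mat m m" using A Xc by auto
  have "(A * X)\<^sup>T = X\<^sup>T * (A\<^sup>T * A * X)" using N A Xc by (simp add: transpose_mult[of _ m n _ m])
  also have "\<dots> = (A * X)\<^sup>T * (A * X)"
    using A Xc At by (simp add: transpose_mult[of _ m n _ m] assoc_mult_mat[of _ n m _ n _ m]
        assoc_mult_mat[of _ m n _ m _ m])
  finally have e: "(A * X)\<^sup>T = (A * X)\<^sup>T * (A * X)" .
  have "A * X = ((A * X)\<^sup>T)\<^sup>T" by simp
  also have "\<dots> = ((A * X)\<^sup>T * (A * X))\<^sup>T" using e by simp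
  also have "\<dots> = (A * X)\<^sup>T * (A * X)" using AXc by (simp add: transpose_mult[of _ m m _ m])
  finally have "(A * X)\<^sup>T = A * X" using e by simp
  thus ?thesis using AXA Xc by auto
qed



lemma assoc_dim: "dim_col A = dim_row B \<Longrightarrow> dim_col B = dim_row C \<Longrightarrow> A * B * C = A * (B * (C :: 'a :: semiring_0 mat))"
  by (rule assoc_mult_mat[of A "dim_row A" "dim_col A" B "dim_col B" C "dim_col C"]) auto

lemma transpose_mult_dim: "dim_col A = dim_row B \<Longrightarrow> (A * B)\<^sup>T = B\<^sup>T * (A :: 'a :: comm_semiring_0 mat)\<^sup>T"
  by (rule transpose_mult[of A "dim_row A" "dim_col A" B "dim_col B"]) auto

lemma assoc_use: "dim_col A = dim_row B \<Longrightarrow> dim_col B = dim_row C \<Longrightarrow> B * C = D \<Longrightarrow> A * (B * (C :: 'a :: semiring_0 mat)) = A * D"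
  by simp

lemma mp_exists:
  fixes A :: "real mat"
  assumes A: "A \<in> carrier_mat m n"
  shows "\<exists>G. penrose A G"
proof -
  obtain X where Xc: "X \<in> carrier_mat n m" and AXA: "A * X * A = A" and sX: "(A * X)\<^sup>T = A * X"
    using inv13_exists[OF A] by auto
  have At: "A\<^sup>T \<in> carrier_mat n m" using A by auto
  obtain X' where X'c: "X' \<in> carrier_mat m n" and AXA': "A\<^sup>T * X' * A\<^sup>T = A\<^sup>T" and sX': "(A\<^sup>T * X')\<^sup>T = A\<^sup>T * X'"
    using inv13_exists[OF At] by auto
  define Z where "Z = X'\<^sup>T"
  have Zc: "Z \<in> carrier_mat n m" unfolding Z_def using X'c by auto
  have d: "dim_row A = m" "dim_col A = n" "dim_row X = n" "dim_col X = m" "dim_row Z = n" "dim_col Z = m"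
    "dim_row X' = m" "dim_col X' = n"
    using A Xc Zc X'c by auto
  have AZA: "A * Z * A = A"
  proof -
    have "(A\<^sup>T * X' * A\<^sup>T)\<^sup>T = A * Z * A" unfolding Z_def
      using d by (simp add: transpose_mult_dim assoc_dim)
    thus ?thesis using AXA' by simp
  qed
  have sZ: "(Z * A)\<^sup>T = Z * A"
  proof -
    have "(Z * A)\<^sup>T = A\<^sup>T * X'" unfolding Z_def using d by (simp add: transpose_mult_dim)
    also have "\<dots> = (A\<^sup>T * X')\<^sup>T" using sX' by simp
    also have "\<dots> = Z * A" unfolding Z_def using d by (simp add: transpose_mult_dim)
    finally show ?thesis .
  qed
  have AXA2: "A * (X * A) = A" using AXA d by (simp add: assoc_dim)
  have AZA2: "A * (Z * A) = A" using AZA d by (simp add: assoc_dim)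
  define G where "G = Z * A * X"
  have "G \<in> carrier_mat n m" unfolding G_def using d Zc Xc A by auto
  moreover have "A * G * A = A"
  proof -
    have "A * G * A = (A * Z * A) * X * A" unfolding G_def using d by (simp add: assoc_dim)
    also have "\<dots> = A" using AZA AXA by simp
    finally show ?thesis .
  qed
  moreover have "G * A * G = G"
  proof -
    have "G * A * G = Z * (A * X * A) * Z * A * X" unfolding G_def using d by (simp add: assoc_dim)
    also have "\<dots> = Z * (A * Z * A) * X" using AXA d by (simp add: assoc_dim)
    also have "\<dots> = G" unfolding G_def using AZA by simp
    finally show ?thesis .
  qed
  moreover have "A * G = A * X"
  proof -
    have "A * G = (A * Z * A) * X" unfolding G_def using d by (simp add: assoc_dim)
    thus ?thesis using AZA by simp
  qed
  moreover have "G * A = Z * A"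
  proof -
    have "G * A = Z * (A * X * A)" unfolding G_def using d by (simp add: assoc_dim)
    thus ?thesis using AXA by simp
  qed
  ultimately have "penrose A G" unfolding penrose_def using sX sZ d by simp
  thus ?thesis by blast
qed

lemma mp_unique:
  assumes X: "penrose A X" and Y: "penrose A Y"
  shows "X = Y"
proof -
  from X have Xc: "X \<in> carrier_mat (dim_col A) (dim_row A)" and AXA: "A * X * A = A" and XAX: "X * A * X = X"
    and sX: "(A * X)\<^sup>T = A * X" and sX2: "(X * A)\<^sup>T = X * A" unfolding penrose_def by auto
  from Y have Yc: "Y \<in> carrier_mat (dim_col A) (dim_row A)" and AYA: "A * Y * A = A" and YAY: "Y * A * Y = Y"
    and sY: "(A * Y)\<^sup>T = A * Y" and sY2: "(Y * A)\<^sup>T = Y * A" unfolding penrose_def by auto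
  have d: "dim_row X = dim_col A" "dim_col X = dim_row A" "dim_row Y = dim_col A" "dim_col Y = dim_row A"
    using Xc Yc by auto
  have e1: "X = X * A * Y"
  proof -
    have "X = X * (A * X)\<^sup>T" using XAX sX d by (simp add: assoc_dim)
    also have "\<dots> = X * (X\<^sup>T * (A * Y * A)\<^sup>T)" using AYA d by (simp add: transpose_mult_dim)
    also have "\<dots> = X * ((A * X)\<^sup>T * (A * Y)\<^sup>T)" using d by (simp add: transpose_mult_dim assoc_dim)
    also have "\<dots> = X * (A * X) * (A * Y)" using sX sY d by (simp add: assoc_dim)
    also have "\<dots> = X * A * Y" using XAX d by (simp add: assoc_dim)
    finally show ?thesis .
  qed
  have e2: "Y = X * A * Y"
  proof -
    have "Y = (Y * A)\<^sup>T * Y" using YAY sY2 d by (simp add: assoc_dim)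
    also have "\<dots> = (A * X * A)\<^sup>T * Y\<^sup>T * Y" using AXA d by (simp add: transpose_mult_dim)
    also have "\<dots> = (X * A)\<^sup>T * (Y * A)\<^sup>T * Y" using d by (simp add: transpose_mult_dim assoc_dim)
    also have "\<dots> = (X * A) * (Y * A) * Y" using sX2 sY2 by simp
    also have "\<dots> = X * A * Y" using YAY d by (simp add: assoc_dim)
    finally show ?thesis .
  qed
  show ?thesis using e1 e2 by simp
qed

lemma pinv_penrose:
  assumes "A \<in> carrier_mat m n"
  shows "penrose A (pinv A)"
proof -
  obtain G where "penrose A G" using mp_exists[OF assms] by auto
  hence "\<exists>!G. penrose A G" using mp_unique by blast
  thus ?thesis unfolding pinv_def by (rule theI')
qed



lemma col_unit: assumes A: "(A :: 'a :: semiring_1 mat) \<in> carrier_mat m n" and j: "j < n"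
  shows "col A j = A *\<^sub>v unit_vec n j"
proof -
  have "A * 1\<^sub>m n = A" using A by (rule right_mult_one_mat)
  hence "col A j = col (A * 1\<^sub>m n) j" by simp
  also have "\<dots> = A *\<^sub>v col (1\<^sub>m n) j" using A j by (intro col_mult2, auto)
  finally show ?thesis using j by simp
qed

lemma left_fix:
  fixes X U A :: "real mat"
  assumes X: "X \<in> carrier_mat m m" and U: "U \<in> carrier_mat m n" and A: "A \<in> carrier_mat m k"
    and XU: "X * U = U" and R: "range_mat A \<subseteq> range_mat U"
  shows "X * A = A"
proof (rule mat_col_eqI)
  fix j assume "j < dim_col A" hence j: "j < k" using A by auto
  have "col A j \<in> range_mat A" unfolding range_mat_def using col_unit[OF A j] A by auto
  with R obtain y where y: "y \<in> carrier_vec n" and cy: "col A j = U *\<^sub>v y"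
    unfolding range_mat_def using U by auto
  have "col (X * A) j = X *\<^sub>v col A j" using X A j by (intro col_mult2, auto)
  also have "\<dots> = (X * U) *\<^sub>v y" unfolding cy using X U y by (simp add: assoc_mult_mat_vec)
  also have "\<dots> = col A j" using XU cy by simp
  finally show "col (X * A) j = col A j" .
qed (insert X A, auto)

lemma null_transfer:
  fixes U A D :: "real mat"
  assumes U: "U \<in> carrier_mat m n" and A: "A \<in> carrier_mat m' n" and D: "D \<in> carrier_mat n k"
    and N: "null_mat U \<subseteq> null_mat A" and UD: "U * D = 0\<^sub>m m k"
  shows "A * D = 0\<^sub>m m' k"
proof (rule mat_col_eqI)
  fix j assume "j < dim_col (0\<^sub>m m' k :: real mat)" hence j: "j < k" by auto
  have "U *\<^sub>v col D j = col (U * D) j" using U D j by (intro col_mult2[symmetric], auto)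
  also have "\<dots> = 0\<^sub>v m" unfolding UD using j by auto
  finally have "col D j \<in> null_mat U" unfolding null_mat_def using U D by auto
  hence "col D j \<in> null_mat A" using N by auto
  hence "A *\<^sub>v col D j = 0\<^sub>v m'" unfolding null_mat_def using A by auto
  moreover have "col (A * D) j = A *\<^sub>v col D j" using A D j by (intro col_mult2, auto)
  ultimately show "col (A * D) j = col (0\<^sub>m m' k) j" using j by auto
qed (insert A D, auto)

lemma proj_eq:
  fixes P1 P2 :: "real mat"
  assumes "P1 \<in> carrier_mat k k" "P2 \<in> carrier_mat k k" "P1\<^sup>T = P1" "P2\<^sup>T = P2"
    "P1 * P2 = P1" "P2 * P1 = P2"
  shows "P1 = P2"
proof -
  have "P1 = (P1 * P2)\<^sup>T" using assms by simp
  also have "\<dots> = P2 * P1" using assms(1-4) by (simp add: transpose_mult[of _ k k _ k])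
  finally have "P1 = P2 * P1" .
  thus ?thesis using assms(6) by metis
qed

lemma proj_eq':
  fixes P1 P2 :: "real mat"
  assumes "P1 \<in> carrier_mat k k" "P2 \<in> carrier_mat k k" "P1\<^sup>T = P1" "P2\<^sup>T = P2"
    "P1 * P2 = P2" "P2 * P1 = P1"
  shows "P1 = P2"
proof -
  have "P1 = (P2 * P1)\<^sup>T" using assms(6,3) by simp
  also have "\<dots> = P1 * P2" using assms(1-4) by (simp add: transpose_mult[of _ k k _ k])
  finally have "P1 = P1 * P2" .
  thus ?thesis using assms(5) by metis
qed

lemma self_minus: "(X :: 'a :: ab_group_add mat) \<in> carrier_mat m n \<Longrightarrow> X - X = 0\<^sub>m m (n::nat)"
  by (rule eq_matI, auto)

lemma range_proj_eq:
  fixes A U :: "real mat"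
  assumes A: "A \<in> carrier_mat m n" and U: "U \<in> carrier_mat m n" and R: "range_mat U = range_mat A"
  shows "U * pinv U = A * pinv A"
proof -
  have pu: "penrose U (pinv U)" and pa: "penrose A (pinv A)" using pinv_penrose A U by blast+
  define u a where "u = pinv U" and "a = pinv A"
  from pu have uc: "u \<in> carrier_mat n m" and UuU: "U * u * U = U" and su: "(U * u)\<^sup>T = U * u"
    unfolding penrose_def u_def using U by auto
  from pa have ac: "a \<in> carrier_mat n m" and AaA: "A * a * A = A" and sa: "(A * a)\<^sup>T = A * a"
    unfolding penrose_def a_def using A by auto
  have d: "dim_row A = m" "dim_col A = n" "dim_row U = m" "dim_col U = n" "dim_row u = n" "dim_col u = m"
    "dim_row a = n" "dim_col a = m" using A U uc ac by auto
  have QuA: "U * u * A = A" by (rule left_fix[OF _ U A UuU], insert U uc R, auto)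
  have QaU: "A * a * U = U" by (rule left_fix[OF _ A U AaA], insert A ac R, auto)
  have 1: "U * u * (A * a) = A * a" using QuA d by (simp add: assoc_dim[symmetric])
  have 2: "A * a * (U * u) = U * u" using QaU d by (simp add: assoc_dim[symmetric])
  show ?thesis unfolding u_def[symmetric] a_def[symmetric]
    by (rule proj_eq'[of _ m], insert U uc A ac su sa 1 2, auto)
qed

lemma null_proj_eq:
  fixes A U :: "real mat"
  assumes A: "A \<in> carrier_mat m n" and U: "U \<in> carrier_mat m n" and N: "null_mat U = null_mat A"
  shows "pinv U * U = pinv A * A"
proof -
  have pu: "penrose U (pinv U)" and pa: "penrose A (pinv A)" using pinv_penrose A U by blast+
  define u a where "u = pinv U" and "a = pinv A"
  from pu have uc: "u \<in> carrier_mat n m" and UuU: "U * u * U = U" and su: "(u * U)\<^sup>T = u * U"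
    unfolding penrose_def u_def using U by auto
  from pa have ac: "a \<in> carrier_mat n m" and AaA: "A * a * A = A" and sa: "(a * A)\<^sup>T = a * A"
    unfolding penrose_def a_def using A by auto
  have d: "dim_row A = m" "dim_col A = n" "dim_row U = m" "dim_col U = n" "dim_row u = n" "dim_col u = m"
    "dim_row a = n" "dim_col a = m" using A U uc ac by auto
  have "U * (u * U - 1\<^sub>m n) = U * (u * U) - U * 1\<^sub>m n"
    using U uc by (intro mult_minus_distrib_mat[of _ m n], auto)
  also have "U * (u * U) = U" using UuU d by (simp add: assoc_dim)
  also have "U * 1\<^sub>m n = U" using U by simp
  finally have "U * (u * U - 1\<^sub>m n) = 0\<^sub>m m n" using self_minus[OF U] by simp
  hence "A * (u * U - 1\<^sub>m n) = 0\<^sub>m m n" by (intro null_transfer[OF U A _ ], insert N uc U, auto)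
  moreover have "A * (u * U - 1\<^sub>m n) = A * (u * U) - A * 1\<^sub>m n"
    using A uc U by (intro mult_minus_distrib_mat[of _ m n], auto)
  ultimately have "A * (u * U) - A = 0\<^sub>m m n" using A by simp
  hence AP: "A * (u * U) = A" using mat_diff_zero[of "A * (u * U)" m n A] A uc U by auto
  have "A * (a * A - 1\<^sub>m n) = A * (a * A) - A * 1\<^sub>m n"
    using A ac by (intro mult_minus_distrib_mat[of _ m n], auto)
  also have "A * (a * A) = A" using AaA d by (simp add: assoc_dim)
  also have "A * 1\<^sub>m n = A" using A by simp
  finally have "A * (a * A - 1\<^sub>m n) = 0\<^sub>m m n" using self_minus[OF A] by simp
  hence "U * (a * A - 1\<^sub>m n) = 0\<^sub>m m n" by (intro null_transfer[OF A U _ ], insert N ac A, auto)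
  moreover have "U * (a * A - 1\<^sub>m n) = U * (a * A) - U * 1\<^sub>m n"
    using U ac A by (intro mult_minus_distrib_mat[of _ m n], auto)
  ultimately have "U * (a * A) - U = 0\<^sub>m m n" using U by simp
  hence UP: "U * (a * A) = U" using mat_diff_zero[of "U * (a * A)" m n U] A ac U by auto
  have 1: "a * A * (u * U) = a * A" using AP d by (simp add: assoc_dim)
  have 2: "u * U * (a * A) = u * U" using UP d by (simp add: assoc_dim)
  have "u * U = a * A"
    by (rule proj_eq[of _ n], insert U uc A ac su sa 1 2, auto)
  thus ?thesis unfolding u_def a_def .
qed



definition nnm :: "real mat \<Rightarrow> bool" where
  "nnm X \<longleftrightarrow> (\<forall>i<dim_row X. \<forall>j<dim_col X. 0 \<le> X $$ (i,j))"

lemma nnm_mult: assumes "nnm X" "nnm Y" "dim_col X = dim_row Y" shows "nnm (X * Y)"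
  using assms unfolding nnm_def by (auto simp: scalar_prod_def intro!: sum_nonneg)

lemma mv_index: "i < dim_row A \<Longrightarrow> dim_vec v = dim_col A \<Longrightarrow> (A *\<^sub>v v) $ i = (\<Sum>j<dim_col A. A $$ (i,j) * v $ j)"
  by (auto simp: scalar_prod_def atLeast0LessThan)

lemma mono_mv:
  assumes X: "X \<in> carrier_mat k n" and nX: "nnm X" and x: "x \<in> carrier_vec n" and y: "y \<in> carrier_vec n"
    and le: "\<And>j. j < n \<Longrightarrow> x $ j \<le> y $ j" and i: "i < k"
  shows "(X *\<^sub>v x) $ i \<le> (X *\<^sub>v y) $ i"
proof -
  have "(X *\<^sub>v x) $ i = (\<Sum>j<n. X $$ (i,j) * x $ j)" using X x i by (subst mv_index, auto)
  also have "\<dots> \<le> (\<Sum>j<n. X $$ (i,j) * y $ j)"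
    by (rule sum_mono, rule mult_left_mono, insert le nX X i, auto simp: nnm_def)
  also have "\<dots> = (X *\<^sub>v y) $ i" using X y i by (subst mv_index, auto)
  finally show ?thesis .
qed

lemma nn_mv:
  assumes X: "X \<in> carrier_mat k n" and nX: "nnm X" and x: "x \<in> carrier_vec n"
    and le: "\<And>j. j < n \<Longrightarrow> 0 \<le> x $ j" and i: "i < k"
  shows "0 \<le> (X *\<^sub>v x) $ i"
proof -
  have "(X *\<^sub>v x) $ i = (\<Sum>j<n. X $$ (i,j) * x $ j)" using X x i by (subst mv_index, auto)
  also have "\<dots> \<ge> 0" by (rule sum_nonneg, insert le nX X i, auto simp: nnm_def)
  finally show ?thesis .
qed

lemma rho_eig:
  assumes T: "T \<in> carrier_mat n n" and n: "n > 0"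
  shows "\<exists>l v. v \<in> carrier_vec n \<and> v \<noteq> 0\<^sub>v n \<and> map_mat complex_of_real T *\<^sub>v v = l \<cdot>\<^sub>v v \<and> cmod l = rho T"
proof -
  have cT: "map_mat complex_of_real T \<in> carrier_mat n n" using T by auto
  from spectral_radius_mem_max(1)[OF cT n] obtain l where
    l: "l \<in> spectrum (map_mat complex_of_real T)" and r: "rho T = cmod l"
    unfolding rho_def by auto
  from l obtain v where "eigenvector (map_mat complex_of_real T) v l"
    unfolding spectrum_def eigenvalue_def by auto
  thus ?thesis unfolding eigenvector_def using r T by auto
qed

lemma rho_le:
  assumes T: "T \<in> carrier_mat n n" and n: "n > 0"
    and b: "\<And>l v. v \<in> carrier_vec n \<Longrightarrow> v \<noteq> 0\<^sub>v n \<Longrightarrow> map_mat complex_of_real T *\<^sub>v v = l \<cdot>\<^sub>v v \<Longrightarrow> cmod l \<le> bd"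
  shows "rho T \<le> bd"
  using rho_eig[OF T n] b by metis

lemma rho_nonneg:
  assumes T: "T \<in> carrier_mat n n" and n: "n > 0"
  shows "rho T \<ge> 0"
  using rho_eig[OF T n] by (metis norm_ge_zero)

definition absv :: "complex vec \<Rightarrow> real vec" where
  "absv v = vec (dim_vec v) (\<lambda>i. cmod (v $ i))"

lemma abs_ev:
  assumes T: "T \<in> carrier_mat n n" and nT: "nnm T" and v: "v \<in> carrier_vec n"
    and ev: "map_mat complex_of_real T *\<^sub>v v = l \<cdot>\<^sub>v v" and i: "i < n"
  shows "cmod l * absv v $ i \<le> (T *\<^sub>v absv v) $ i"
proof -
  have "l * v $ i = (map_mat complex_of_real T *\<^sub>v v) $ i" using ev v i by simp
  also have "\<dots> = (\<Sum>j<n. complex_of_real (T $$ (i,j)) * v $ j)"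
    using T v i by (subst mv_index, auto)
  finally have e: "l * v $ i = (\<Sum>j<n. complex_of_real (T $$ (i,j)) * v $ j)" .
  have "cmod l * absv v $ i = cmod (l * v $ i)" using v i by (simp add: absv_def norm_mult)
  also have "\<dots> \<le> (\<Sum>j<n. cmod (complex_of_real (T $$ (i,j)) * v $ j))" unfolding e by (rule norm_sum)
  also have "\<dots> = (\<Sum>j<n. T $$ (i,j) * absv v $ j)"
    by (rule sum.cong, insert nT T i v, auto simp: nnm_def absv_def norm_mult)
  also have "\<dots> = (T *\<^sub>v absv v) $ i" using T v i by (subst mv_index, auto simp: absv_def)
  finally show ?thesis .
qed

lemma absv_carrier[simp]: "v \<in> carrier_vec n \<Longrightarrow> absv v \<in> carrier_vec n"
  unfolding absv_def by auto

lemma absv_nonzero: assumes "v \<in> carrier_vec n" "v \<noteq> 0\<^sub>v n"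
  shows "\<exists>i<n. absv v $ i > 0"
proof (rule ccontr)
  assume "\<not> ?thesis"
  hence "\<forall>i<n. v $ i = 0" using assms(1) unfolding absv_def by (auto)
  hence "v = 0\<^sub>v n" using assms(1) by (intro eq_vecI, auto)
  thus False using assms(2) by simp
qed

lemma rho_lt1:
  assumes T: "T \<in> carrier_mat n n" and G: "G \<in> carrier_mat n n" and n: "n > 0"
    and nT: "nnm T" and nG: "nnm G" and GT: "G = T + G * T"
  shows "rho T < 1"
proof (rule ccontr)
  assume "\<not> rho T < 1"
  hence r1: "rho T \<ge> 1" by simp
  obtain l v where v: "v \<in> carrier_vec n" "v \<noteq> 0\<^sub>v n" and ev: "map_mat complex_of_real T *\<^sub>v v = l \<cdot>\<^sub>v v"
    and l: "cmod l = rho T" using rho_eig[OF T n] by blast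
  define w where "w = absv v"
  have wc: "w \<in> carrier_vec n" unfolding w_def using v by simp
  have w0: "\<And>i. i < n \<Longrightarrow> 0 \<le> w $ i" unfolding w_def absv_def using v by auto
  have Tw: "\<And>i. i < n \<Longrightarrow> w $ i \<le> (T *\<^sub>v w) $ i"
  proof -
    fix i assume i: "i < n"
    have "w $ i \<le> cmod l * w $ i" using l r1 w0[OF i] by (simp add: mult_le_cancel_right1)
    also have "\<dots> \<le> (T *\<^sub>v w) $ i" unfolding w_def by (rule abs_ev[OF T nT v(1) ev i])
    finally show "w $ i \<le> (T *\<^sub>v w) $ i" .
  qed
  have Twc: "T *\<^sub>v w \<in> carrier_vec n" using T wc by auto
  have "\<And>i. i < n \<Longrightarrow> w $ i \<le> 0"
  proof -
    fix i assume i: "i < n"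
    have "(G *\<^sub>v w) $ i = ((T + G * T) *\<^sub>v w) $ i" using GT by simp
    also have "\<dots> = (T *\<^sub>v w) $ i + (G *\<^sub>v (T *\<^sub>v w)) $ i"
      using T G wc i by (simp add: add_mult_distrib_mat_vec[of _ n n] assoc_mult_mat_vec[of _ n n _ n])
    finally have e: "(G *\<^sub>v w) $ i = (T *\<^sub>v w) $ i + (G *\<^sub>v (T *\<^sub>v w)) $ i" .
    have "(G *\<^sub>v w) $ i \<le> (G *\<^sub>v (T *\<^sub>v w)) $ i" by (rule mono_mv[OF G nG wc Twc Tw i])
    with e Tw[OF i] show "w $ i \<le> 0" by simp
  qed
  with w0 have "\<forall>i<n. w $ i = 0" by force
  with absv_nonzero[OF v] show False unfolding w_def by auto
qed



lemma rho_ub: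
  assumes H: "H \<in> carrier_mat n n" and n: "n > 0" and nH: "nnm H" and x: "x \<in> carrier_vec n"
    and pos: "\<And>i. i < n \<Longrightarrow> 0 < x $ i" and le: "\<And>i. i < n \<Longrightarrow> (H *\<^sub>v x) $ i \<le> s * x $ i"
  shows "rho H \<le> s"
proof (rule rho_le[OF H n])
  fix l v assume v: "v \<in> carrier_vec n" and v0: "v \<noteq> 0\<^sub>v n" and ev: "map_mat complex_of_real H *\<^sub>v v = l \<cdot>\<^sub>v v"
  define w where "w = absv v"
  have wc: "w \<in> carrier_vec n" unfolding w_def using v by simp
  have w0: "\<And>i. i < n \<Longrightarrow> 0 \<le> w $ i" unfolding w_def absv_def using v by auto
  define f where "f = (\<lambda>j. w $ j / x $ j)"
  define t where "t = Max (f ` {0..<n})"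
  have "t \<in> f ` {0..<n}" unfolding t_def using n by (intro Max_in, auto)
  then obtain i0 where i0: "i0 < n" and ti0: "t = f i0" by auto
  have tge: "\<And>j. j < n \<Longrightarrow> f j \<le> t" unfolding t_def by (intro Max_ge, auto)
  have wle: "\<And>j. j < n \<Longrightarrow> w $ j \<le> t * x $ j"
  proof -
    fix j assume j: "j < n"
    from tge[OF j] pos[OF j] show "w $ j \<le> t * x $ j" unfolding f_def by (simp add: divide_le_eq)
  qed
  obtain j where j: "j < n" and wj: "w $ j > 0" using absv_nonzero[OF v v0] unfolding w_def by auto
  have "0 < f j" unfolding f_def using wj pos[OF j] by simp
  hence tpos: "t > 0" using tge[OF j] by simp
  have wi0: "w $ i0 = t * x $ i0" using ti0 pos[OF i0] unfolding f_def by simp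
  hence wi0pos: "w $ i0 > 0" using tpos pos[OF i0] by simp
  have "cmod l * w $ i0 \<le> (H *\<^sub>v w) $ i0" unfolding w_def by (rule abs_ev[OF H nH v ev i0])
  also have "\<dots> \<le> (H *\<^sub>v (t \<cdot>\<^sub>v x)) $ i0"
    by (rule mono_mv[OF H nH wc _ _ i0], insert x wle, auto)
  also have "\<dots> = t * (H *\<^sub>v x) $ i0" using H x i0 by (simp add: mult_mat_vec[of _ n n])
  also have "\<dots> \<le> t * (s * x $ i0)" using le[OF i0] tpos by simp
  also have "\<dots> = s * w $ i0" using wi0 by simp
  finally show "cmod l \<le> s" using wi0pos by simp
qed

lemma smult_pow:
  assumes A: "(A :: 'a :: comm_ring_1 mat) \<in> carrier_mat n n"
  shows "(k \<cdot>\<^sub>m A) ^\<^sub>m p = (k ^ p) \<cdot>\<^sub>m (A ^\<^sub>m p)"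
proof (induction p)
  case 0
  show ?case using A by (intro eq_matI, auto)
next
  case (Suc p)
  have "(k \<cdot>\<^sub>m A) ^\<^sub>m Suc p = (k ^ p \<cdot>\<^sub>m A ^\<^sub>m p) * (k \<cdot>\<^sub>m A)" using Suc by simp
  also have "\<dots> = (k ^ Suc p) \<cdot>\<^sub>m (A ^\<^sub>m p * A)"
  proof -
    have Ap: "A ^\<^sub>m p \<in> carrier_mat n n" using A by auto
    have "(k ^ p \<cdot>\<^sub>m A ^\<^sub>m p) * (k \<cdot>\<^sub>m A) = k ^ p \<cdot>\<^sub>m (A ^\<^sub>m p * (k \<cdot>\<^sub>m A))"
      using Ap A by (intro mult_smult_assoc_mat, auto)
    also have "A ^\<^sub>m p * (k \<cdot>\<^sub>m A) = k \<cdot>\<^sub>m (A ^\<^sub>m p * A)"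
      using Ap A by (intro mult_smult_distrib, auto)
    also have "k ^ p \<cdot>\<^sub>m (k \<cdot>\<^sub>m (A ^\<^sub>m p * A)) = (k ^ Suc p) \<cdot>\<^sub>m (A ^\<^sub>m p * A)"
      by (intro eq_matI, auto simp: ac_simps)
    finally show ?thesis .
  qed
  finally show ?case by simp
qed

lemma decay:
  assumes T: "T \<in> carrier_mat n n" and n: "n > 0" and r: "rho T < s'" and s': "s' > 0"
  shows "\<exists>c. \<forall>k i j. i < n \<longrightarrow> j < n \<longrightarrow> \<bar>(T ^\<^sub>m k) $$ (i,j)\<bar> \<le> c * s' ^ k"
proof -
  define T' where "T' = (1 / s') \<cdot>\<^sub>m T"
  have T'c: "T' \<in> carrier_mat n n" unfolding T'_def using T by auto
  define C where "C = map_mat complex_of_real T'"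
  have Cc: "C \<in> carrier_mat n n" unfolding C_def using T'c by auto
  have cT: "map_mat complex_of_real T \<in> carrier_mat n n" using T by auto
  have "spectral_radius C < 1"
  proof -
    from spectral_radius_mem_max(1)[OF Cc n] obtain mu where
      mu: "mu \<in> spectrum C" and r: "spectral_radius C = cmod mu" by auto
    from mu obtain v where "eigenvector C v mu" unfolding spectrum_def eigenvalue_def by auto
    hence v: "v \<in> carrier_vec n" "v \<noteq> 0\<^sub>v n" and ev: "C *\<^sub>v v = mu \<cdot>\<^sub>v v"
      unfolding eigenvector_def using Cc by auto
    have ev2: "map_mat complex_of_real T *\<^sub>v v = (complex_of_real s' * mu) \<cdot>\<^sub>v v"
    proof (rule eq_vecI)
      fix i assume "i < dim_vec ((complex_of_real s' * mu) \<cdot>\<^sub>v v)"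
      hence i: "i < n" using v by auto
      have "(map_mat complex_of_real T *\<^sub>v v) $ i = (\<Sum>j<n. complex_of_real (T $$ (i,j)) * v $ j)"
        using T v i by (subst mv_index, auto)
      also have "\<dots> = complex_of_real s' * (\<Sum>j<n. complex_of_real (T' $$ (i,j)) * v $ j)"
        unfolding sum_distrib_left
        by (rule sum.cong, insert T i s', auto simp: T'_def)
      also have "(\<Sum>j<n. complex_of_real (T' $$ (i,j)) * v $ j) = (C *\<^sub>v v) $ i"
        using T'c v i by (subst mv_index, auto simp: C_def)
      also have "\<dots> = mu * v $ i" using ev v i by simp
      finally show "(map_mat complex_of_real T *\<^sub>v v) $ i = ((complex_of_real s' * mu) \<cdot>\<^sub>v v) $ i"
        using v i by simp
    qed (insert v T, auto)
    hence "eigenvector (map_mat complex_of_real T) v (complex_of_real s' * mu)"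
      unfolding eigenvector_def using v T by auto
    hence "cmod (complex_of_real s' * mu) \<in> norm ` spectrum (map_mat complex_of_real T)"
      unfolding spectrum_def eigenvalue_def by auto
    from spectral_radius_mem_max(2)[OF cT n this]
    have "s' * cmod mu \<le> rho T" unfolding rho_def using s' by (simp add: norm_mult)
    with r s' \<open>rho T < s'\<close> show ?thesis by (simp add: mult_less_cancel_left1) (smt (verit) mult_le_cancel_left1)
  qed
  from spectral_radius_jnf_norm_bound_less_1_upper_triangular[OF Cc this]
  obtain c where c: "\<And>k. norm_bound (C ^\<^sub>m k) c" by auto
  show ?thesis
  proof (intro exI[of _ c] allI impI)
    fix k i j assume i: "i < n" and j: "j < n"
    have "C ^\<^sub>m k = map_mat complex_of_real (T' ^\<^sub>m k)" unfolding C_def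
      by (rule of_real_hom.mat_hom_pow[OF T'c, symmetric])
    also have "T' ^\<^sub>m k = (1 / s') ^ k \<cdot>\<^sub>m (T ^\<^sub>m k)" unfolding T'_def by (rule smult_pow[OF T])
    finally have Ck: "C ^\<^sub>m k = map_mat complex_of_real ((1 / s') ^ k \<cdot>\<^sub>m (T ^\<^sub>m k))" .
    have Tk: "T ^\<^sub>m k \<in> carrier_mat n n" using T by auto
    have Ckc: "C ^\<^sub>m k \<in> carrier_mat n n" using Cc by auto
    from c[of k] i j Ckc Cc have "norm ((C ^\<^sub>m k) $$ (i,j)) \<le> c" unfolding norm_bound_def
      by (metis carrier_matD(1) carrier_matD(2))
    moreover have "(C ^\<^sub>m k) $$ (i,j) = complex_of_real ((1 / s') ^ k * (T ^\<^sub>m k) $$ (i,j))"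
    proof -
      have "dim_row ((1 / s') ^ k \<cdot>\<^sub>m (T ^\<^sub>m k)) = n" "dim_col ((1 / s') ^ k \<cdot>\<^sub>m (T ^\<^sub>m k)) = n"
        using Tk by auto
      thus ?thesis unfolding Ck using Tk i j by (simp add: index_map_mat)
    qed
    ultimately have "norm (complex_of_real ((1 / s') ^ k * (T ^\<^sub>m k) $$ (i,j))) \<le> c" by simp
    hence "\<bar>(1 / s') ^ k * (T ^\<^sub>m k) $$ (i,j)\<bar> \<le> c" by (simp only: norm_of_real)
    hence "(1 / s') ^ k * \<bar>(T ^\<^sub>m k) $$ (i,j)\<bar> \<le> c" using s'
      by (simp add: abs_mult)
    hence "\<bar>(T ^\<^sub>m k) $$ (i,j)\<bar> \<le> c * s' ^ k" using s'
      by (simp add: power_one_over field_simps)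
    thus "\<bar>(T ^\<^sub>m k) $$ (i,j)\<bar> \<le> c * s' ^ k" .
  qed
qed



lemma pow_Suc_left: assumes A: "(A :: 'a :: semiring_1 mat) \<in> carrier_mat n n"
  shows "A ^\<^sub>m Suc k = A * A ^\<^sub>m k"
proof (induction k)
  case 0 show ?case using A by simp
next
  case (Suc k)
  have "A ^\<^sub>m Suc (Suc k) = A ^\<^sub>m Suc k * A" by (simp only: pow_mat.simps)
  also have "\<dots> = A * A ^\<^sub>m k * A" by (simp only: Suc)
  also have "\<dots> = A * (A ^\<^sub>m k * A)" using A by (intro assoc_mult_mat[of _ n n _ n _ n], auto)
  also have "A ^\<^sub>m k * A = A ^\<^sub>m Suc k" by (simp only: pow_mat.simps)
  finally show ?case .
qed

lemma nnm_pow: assumes A: "A \<in> carrier_mat n n" and nA: "nnm A" shows "nnm (A ^\<^sub>m k)"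
proof (induction k)
  case 0 show ?case using A by (auto simp: nnm_def)
next
  case (Suc k) thus ?case using nnm_mult[OF Suc nA] A by simp
qed

lemma mv_assoc:
  fixes A B :: "'a :: comm_ring_1 mat"
  assumes a: "dim_col A = dim_row B" "dim_vec v = dim_col B"
  shows "(A *\<^sub>v (B *\<^sub>v v)) = ((A * B) *\<^sub>v v)"
proof -
  have 1: "A \<in> carrier_mat (dim_row A) (dim_row B)" using a unfolding carrier_mat_def by simp
  have 2: "B \<in> carrier_mat (dim_row B) (dim_col B)" unfolding carrier_mat_def by simp
  have 3: "v \<in> carrier_vec (dim_col B)" using a unfolding carrier_vec_def by simp
  show ?thesis using assoc_mult_mat_vec[OF 1 2 3] by simp
qed

lemma core_cmp:
  fixes A U V M N u mm :: "real mat"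
  assumes A: "A \<in> carrier_mat m n" and U: "U \<in> carrier_mat m n" and V: "V \<in> carrier_mat m n"
    and M: "M \<in> carrier_mat m n" and N: "N \<in> carrier_mat m n"
    and uc: "u \<in> carrier_mat n m" and mc: "mm \<in> carrier_mat n m"
    and AUV: "A = U - V" and NMA: "N = M - A"
    and i2: "mm * (U * u) = mm" and i3: "mm * M * u = u"
    and nu: "nnm u" and nV: "nnm V" and nmm: "nnm mm" and nN: "nnm N"
    and ru: "\<And>i. i < n \<Longrightarrow> 0 < (\<Sum>j<m. u $$ (i,j))"
    and rm: "\<And>i. i < n \<Longrightarrow> 0 < (\<Sum>j<m. mm $$ (i,j))"
    and n: "n > 0" and r1: "rho (u * V) < 1"
  shows "rho (u * V * mm * N) \<le> rho (u * V)"
proof -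
  define T1 where "T1 = u * V"
  define T2 where "T2 = mm * N"
  have T1c: "T1 \<in> carrier_mat n n" unfolding T1_def using uc V by auto
  have T2c: "T2 \<in> carrier_mat n n" unfolding T2_def using mc N by auto
  have nT1: "nnm T1" unfolding T1_def by (rule nnm_mult[OF nu nV], insert uc V, auto)
  have nT2: "nnm T2" unfolding T2_def by (rule nnm_mult[OF nmm nN], insert mc N, auto)
  have Heq: "u * V * mm * N = T1 * T2" unfolding T1_def T2_def
    by (rule assoc_mult_mat[of _ n n _ m _ n], insert uc V mc N, auto)
  have Hc: "T1 * T2 \<in> carrier_mat n n" using T1c T2c by auto
  have nH: "nnm (T1 * T2)" by (rule nnm_mult[OF nT1 nT2], insert T1c T2c, auto)
  define r where "r = rho T1"
  have r0: "r \<ge> 0" unfolding r_def by (rule rho_nonneg[OF T1c n])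
  have r1': "r < 1" using r1 unfolding r_def T1_def .
  have key: "rho (T1 * T2) \<le> s" if rs: "r < s" and s1: "s < 1" for s
  proof -
    have s0: "s > 0" using rs r0 by simp
    define s' where "s' = (r + s) / 2"
    have s's: "s' < s" "r < s'" "s' > 0" unfolding s'_def using rs r0 by auto
    obtain c where c: "\<And>k i j. i < n \<Longrightarrow> j < n \<Longrightarrow> \<bar>(T1 ^\<^sub>m k) $$ (i,j)\<bar> \<le> c * s' ^ k"
      using decay[OF T1c n _ s's(3)] s's(2) unfolding r_def by blast
    have "\<bar>(T1 ^\<^sub>m 0) $$ (0,0)\<bar> \<le> c * s' ^ 0" using n by (intro c, auto)
    hence "\<bar>(T1 ^\<^sub>m 0) $$ (0,0)\<bar> \<le> c" by simp
    hence c0: "c \<ge> 0" using abs_ge_zero order_trans by blast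
    define q where "q = s' / s"
    have q: "0 < q" "q < 1" unfolding q_def using s's s0 by auto
    define B where "B = (1 / s) \<cdot>\<^sub>m T1"
    have Bc: "B \<in> carrier_mat n n" unfolding B_def using T1c by auto
    have nB: "nnm B" using nT1 s0 unfolding B_def nnm_def by auto
    have Bk: "\<And>k i j. i < n \<Longrightarrow> j < n \<Longrightarrow> (B ^\<^sub>m k) $$ (i,j) \<le> c * q ^ k"
    proof -
      fix k i j assume i: "i < n" and j: "j < n"
      have Tk: "T1 ^\<^sub>m k \<in> carrier_mat n n" using T1c by auto
      have dT: "dim_row (T1 ^\<^sub>m k) = n" "dim_col (T1 ^\<^sub>m k) = n" using Tk by auto
      have "(B ^\<^sub>m k) $$ (i,j) = (1/s) ^ k * (T1 ^\<^sub>m k) $$ (i,j)"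
        unfolding B_def smult_pow[OF T1c] using dT i j by simp
      also have "\<dots> \<le> (1/s) ^ k * (c * s' ^ k)"
        using c[OF i j, of k] s0 by (intro mult_left_mono, auto)
      also have "\<dots> = c * q ^ k" unfolding q_def by (simp add: power_divide)
      finally show "(B ^\<^sub>m k) $$ (i,j) \<le> c * q ^ k" .
    qed
    define e where "e = vec m (\<lambda>_. 1 :: real)"
    have ec: "e \<in> carrier_vec m" unfolding e_def by auto
    define ue where "ue = u *\<^sub>v e"
    define me where "me = mm *\<^sub>v e"
    have uec: "ue \<in> carrier_vec n" unfolding ue_def using uc ec by auto
    have mec: "me \<in> carrier_vec n" unfolding me_def using mc ec by auto
    have uei: "\<And>i. i < n \<Longrightarrow> ue $ i = (\<Sum>j<m. u $$ (i,j))"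
      unfolding ue_def e_def using uc by (subst mv_index, auto)
    have mei: "\<And>i. i < n \<Longrightarrow> me $ i = (\<Sum>j<m. mm $$ (i,j))"
      unfolding me_def e_def using mc by (subst mv_index, auto)
    define \<delta> where "\<delta> = Min ((\<lambda>i. ue $ i) ` {0..<n} \<union> (\<lambda>i. me $ i) ` {0..<n})"
    have \<delta>pos: "\<delta> > 0" unfolding \<delta>_def using n ru rm uei mei
      by (subst Min_gr_iff, auto)
    have \<delta>ue: "\<And>i. i < n \<Longrightarrow> \<delta> \<le> ue $ i" unfolding \<delta>_def by (intro Min_le, auto)
    have \<delta>me: "\<And>i. i < n \<Longrightarrow> \<delta> \<le> me $ i" unfolding \<delta>_def by (intro Min_le, auto)
    have ue0: "\<And>i. i < n \<Longrightarrow> 0 \<le> ue $ i"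
    proof -
      fix i assume i: "i < n" show "0 \<le> ue $ i" using \<delta>ue[OF i] \<delta>pos by linarith
    qed
    define Su where "Su = (\<Sum>j<n. ue $ j)"
    have Su0: "Su \<ge> 0" unfolding Su_def using ue0 by (intro sum_nonneg, auto)
    define z where "z = (\<lambda>k. B ^\<^sub>m k *\<^sub>v ue)"
    have zc: "\<And>k. z k \<in> carrier_vec n"
    proof -
      fix k have "B ^\<^sub>m k \<in> carrier_mat n n" using Bc by auto
      thus "z k \<in> carrier_vec n" unfolding z_def using uec by (intro mult_mat_vec_carrier)
    qed
    have z0: "\<And>k i. i < n \<Longrightarrow> 0 \<le> z k $ i" unfolding z_def
      by (rule nn_mv[OF _ nnm_pow[OF Bc nB]], insert Bc uec ue0, auto)
    have zb: "\<And>k i. i < n \<Longrightarrow> z k $ i \<le> c * q ^ k * Su"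
    proof -
      fix k i assume i: "i < n"
      have Bkc: "B ^\<^sub>m k \<in> carrier_mat n n" using Bc by auto
      have "z k $ i = (\<Sum>j<n. (B ^\<^sub>m k) $$ (i,j) * ue $ j)" unfolding z_def
        using Bkc uec i by (subst mv_index, auto)
      also have "\<dots> \<le> (\<Sum>j<n. c * q ^ k * ue $ j)"
        by (rule sum_mono, rule mult_right_mono, insert Bk i ue0, auto)
      also have "\<dots> = c * q ^ k * Su" unfolding Su_def by (simp add: sum_distrib_left)
      finally show "z k $ i \<le> c * q ^ k * Su" .
    qed
    have zS: "\<And>k. z (Suc k) = B *\<^sub>v z k"
    proof -
      fix k
      have "z (Suc k) = (B * B ^\<^sub>m k) *\<^sub>v ue" unfolding z_def pow_Suc_left[OF Bc] ..
      also have "\<dots> = B *\<^sub>v (B ^\<^sub>m k *\<^sub>v ue)" using Bc uec by (intro mv_assoc[symmetric], auto)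
      finally show "z (Suc k) = B *\<^sub>v z k" unfolding z_def .
    qed
    define mV where "mV = mm * V"
    have mVc: "mV \<in> carrier_mat n n" unfolding mV_def using mc V by auto
    have nmV: "nnm mV" unfolding mV_def by (rule nnm_mult[OF nmm nV], insert mc V, auto)
    define L where "L = (\<Sum>i<n. \<Sum>j<n. mV $$ (i,j))"
    have rowL: "\<And>i. i < n \<Longrightarrow> (\<Sum>j<n. mV $$ (i,j)) \<le> L"
    proof -
      fix i assume i: "i < n"
      show "(\<Sum>j<n. mV $$ (i,j)) \<le> L" unfolding L_def
        by (rule member_le_sum[of i], insert i nmV mVc, auto simp: nnm_def intro!: sum_nonneg)
    qed
    have L0: "L \<ge> 0" unfolding L_def using nmV mVc by (auto simp: nnm_def intro!: sum_nonneg)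
    define Kc where "Kc = c * Su * (1 + L / s)"
    have Kc0: "Kc \<ge> 0" unfolding Kc_def using c0 Su0 L0 s0 by auto
    obtain K where K: "q ^ K < \<delta> / (Kc + 1)"
      using real_arch_pow_inv[of "\<delta> / (Kc + 1)" q] \<delta>pos Kc0 q by auto
    have KcK: "Kc * q ^ K < \<delta>"
    proof -
      have "Kc * q ^ K \<le> (Kc + 1) * q ^ K" using q by (simp add: distrib_right)
      also have "\<dots> < (Kc + 1) * (\<delta> / (Kc + 1))" using K Kc0 by (intro mult_strict_left_mono, auto)
      also have "\<dots> = \<delta>" using Kc0 by simp
      finally show ?thesis .
    qed
    have b1: "\<And>i. i < n \<Longrightarrow> z (Suc K) $ i < ue $ i"
    proof -
      fix i assume i: "i < n"
      have "z (Suc K) $ i \<le> c * q ^ Suc K * Su" by (rule zb[OF i])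
      also have "\<dots> \<le> c * q ^ K * Su" using q c0 Su0
        by (intro mult_right_mono mult_left_mono, auto simp: power_decreasing)
      also have "\<dots> \<le> Kc * q ^ K" unfolding Kc_def using c0 Su0 L0 s0 q
        by (simp add: field_simps mult_left_mono)
      also have "\<dots> < \<delta>" by (rule KcK)
      also have "\<dots> \<le> ue $ i" by (rule \<delta>ue[OF i])
      finally show "z (Suc K) $ i < ue $ i" .
    qed
    have b2: "\<And>i. i < n \<Longrightarrow> (1 / s) * (mV *\<^sub>v z K) $ i \<le> me $ i"
    proof -
      fix i assume i: "i < n"
      have "(mV *\<^sub>v z K) $ i = (\<Sum>j<n. mV $$ (i,j) * z K $ j)" using mVc zc i by (subst mv_index, auto)
      also have "\<dots> \<le> (\<Sum>j<n. mV $$ (i,j) * (c * q ^ K * Su))"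
        by (rule sum_mono, rule mult_left_mono, insert zb nmV mVc i, auto simp: nnm_def)
      also have "\<dots> = (\<Sum>j<n. mV $$ (i,j)) * (c * q ^ K * Su)" by (simp add: sum_distrib_right)
      also have "\<dots> \<le> L * (c * q ^ K * Su)" by (rule mult_right_mono[OF rowL[OF i]], insert c0 q Su0, auto)
      finally have "(1 / s) * (mV *\<^sub>v z K) $ i \<le> (1 / s) * (L * (c * q ^ K * Su))" using s0
        by (intro mult_left_mono, auto)
      also have "\<dots> \<le> Kc * q ^ K" unfolding Kc_def using c0 Su0 L0 s0 q
        by (simp add: field_simps)
      also have "\<dots> < \<delta>" by (rule KcK)
      also have "\<dots> \<le> me $ i" by (rule \<delta>me[OF i])
      finally show "(1 / s) * (mV *\<^sub>v z K) $ i \<le> me $ i" by simp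
    qed
    define x where "x = vec n (\<lambda>i. \<Sum>k\<le>K. z k $ i)"
    have xc: "x \<in> carrier_vec n" unfolding x_def by auto
    have x0: "\<And>i. i < n \<Longrightarrow> 0 \<le> x $ i" unfolding x_def using z0 by (auto intro!: sum_nonneg)
    have Bi: "\<And>(y :: real vec) i. y \<in> carrier_vec n \<Longrightarrow> i < n \<Longrightarrow> (B *\<^sub>v y) $ i = (\<Sum>j<n. B $$ (i,j) * y $ j)"
      using Bc by (subst mv_index, auto)
    have Bx: "\<And>i. i < n \<Longrightarrow> (B *\<^sub>v x) $ i = (\<Sum>k\<le>K. z (Suc k) $ i)"
    proof -
      fix i assume i: "i < n"
      have "(B *\<^sub>v x) $ i = (\<Sum>j<n. B $$ (i,j) * x $ j)" using Bc xc i by (subst mv_index, auto)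
      also have "\<dots> = (\<Sum>j<n. \<Sum>k\<le>K. B $$ (i,j) * z k $ j)" unfolding x_def
        by (rule sum.cong, auto simp: sum_distrib_left)
      also have "\<dots> = (\<Sum>k\<le>K. \<Sum>j<n. B $$ (i,j) * z k $ j)" by (rule sum.swap)
      also have "\<dots> = (\<Sum>k\<le>K. (B *\<^sub>v z k) $ i)"
        by (rule sum.cong[OF refl], insert Bi zc i, auto)
      also have "\<dots> = (\<Sum>k\<le>K. z (Suc k) $ i)" unfolding zS ..
      finally show "(B *\<^sub>v x) $ i = (\<Sum>k\<le>K. z (Suc k) $ i)" .
    qed
    have zz0: "z 0 = ue" unfolding z_def using Bc uec by simp
    have diff: "\<And>i. i < n \<Longrightarrow> x $ i - (B *\<^sub>v x) $ i = ue $ i - z (Suc K) $ i"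
    proof -
      fix i assume i: "i < n"
      have "x $ i - (B *\<^sub>v x) $ i = (\<Sum>k\<le>K. z k $ i - z (Suc k) $ i)"
        unfolding Bx[OF i] sum_subtractf using i x_def by simp
      also have "\<dots> = z 0 $ i - z (Suc K) $ i" by (rule sum_telescope)
      finally show "x $ i - (B *\<^sub>v x) $ i = ue $ i - z (Suc K) $ i" unfolding zz0 .
    qed
    have T1B: "\<And>(y :: real vec) i. y \<in> carrier_vec n \<Longrightarrow> i < n \<Longrightarrow> (T1 *\<^sub>v y) $ i = s * (B *\<^sub>v y) $ i"
    proof -
      fix y :: "real vec" and i assume y: "y \<in> carrier_vec n" and i: "i < n"
      have "(B *\<^sub>v y) $ i = (\<Sum>j<n. B $$ (i,j) * y $ j)" using Bc y i by (subst mv_index, auto)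
      also have "\<dots> = (1/s) * (\<Sum>j<n. T1 $$ (i,j) * y $ j)" unfolding sum_distrib_left
        by (rule sum.cong, insert T1c i, auto simp: B_def)
      also have "(\<Sum>j<n. T1 $$ (i,j) * y $ j) = (T1 *\<^sub>v y) $ i" using T1c y i by (subst mv_index, auto)
      finally show "(T1 *\<^sub>v y) $ i = s * (B *\<^sub>v y) $ i" using s0 by simp
    qed
    have Bx0: "\<And>i. i < n \<Longrightarrow> 0 \<le> (B *\<^sub>v x) $ i" by (rule nn_mv[OF Bc nB xc x0])
    have xpos: "\<And>i. i < n \<Longrightarrow> 0 < x $ i"
    proof -
      fix i assume i: "i < n"
      show "0 < x $ i" using diff[OF i] b1[OF i] Bx0[OF i] by linarith
    qed
    have T1x: "\<And>i. i < n \<Longrightarrow> (T1 *\<^sub>v x) $ i \<le> s * x $ i"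
    proof -
      fix i assume i: "i < n"
      have "(T1 *\<^sub>v x) $ i = s * (B *\<^sub>v x) $ i" by (rule T1B[OF xc i])
      also have "\<dots> \<le> s * x $ i" using diff[OF i] b1[OF i] s0 by (intro mult_left_mono, auto)
      finally show "(T1 *\<^sub>v x) $ i \<le> s * x $ i" .
    qed
    define g where "g = (1/s) \<cdot>\<^sub>v (V *\<^sub>v z K)"
    define f where "f = e - g"
    define h where "h = (1/s) \<cdot>\<^sub>v (V *\<^sub>v x) + f"
    have gc: "g \<in> carrier_vec m" unfolding g_def using V zc by auto
    have fc: "f \<in> carrier_vec m" unfolding f_def using gc ec by auto
    have Vxc: "V *\<^sub>v x \<in> carrier_vec m" using V xc by auto
    have VzKc: "V *\<^sub>v z K \<in> carrier_vec m" using V zc by auto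
    have hc: "h \<in> carrier_vec m" unfolding h_def using Vxc fc by auto
    have uT1: "\<And>(y :: real vec). y \<in> carrier_vec n \<Longrightarrow> u *\<^sub>v (V *\<^sub>v y) = T1 *\<^sub>v y"
      unfolding T1_def using uc V by (intro mv_assoc, auto)
    have xh: "x = u *\<^sub>v h"
    proof -
      have "u *\<^sub>v h = u *\<^sub>v ((1/s) \<cdot>\<^sub>v (V *\<^sub>v x)) + u *\<^sub>v f"
        unfolding h_def using uc Vxc fc by (intro mult_add_distrib_mat_vec, auto)
      also have "u *\<^sub>v ((1/s) \<cdot>\<^sub>v (V *\<^sub>v x)) = (1/s) \<cdot>\<^sub>v (T1 *\<^sub>v x)"
        using uc Vxc uT1[OF xc] by (simp add: mult_mat_vec[of _ n m])
      also have "u *\<^sub>v f = ue - u *\<^sub>v g" unfolding f_def ue_def using uc ec gc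
        by (intro mult_minus_distrib_mat_vec, auto)
      also have "u *\<^sub>v g = (1/s) \<cdot>\<^sub>v (T1 *\<^sub>v z K)" unfolding g_def
        using uc VzKc uT1[OF zc] by (simp add: mult_mat_vec[of _ n m])
      finally have e1: "u *\<^sub>v h = (1/s) \<cdot>\<^sub>v (T1 *\<^sub>v x) + (ue - (1/s) \<cdot>\<^sub>v (T1 *\<^sub>v z K))" .
      show ?thesis
      proof (rule eq_vecI)
        fix i assume "i < dim_vec (u *\<^sub>v h)"
        hence i: "i < n" using uc by auto
        have "(u *\<^sub>v h) $ i = (1/s) * (T1 *\<^sub>v x) $ i + (ue $ i - (1/s) * (T1 *\<^sub>v z K) $ i)"
          unfolding e1 using T1c xc zc uec i by simp
        also have "\<dots> = (B *\<^sub>v x) $ i + (ue $ i - z (Suc K) $ i)"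
          using T1B[OF xc i] T1B[OF zc i] s0 zS[of K] by simp
        also have "\<dots> = x $ i" using diff[OF i] by simp
        finally show "x $ i = (u *\<^sub>v h) $ i" by simp
      qed (insert xc uc, auto)
    qed
    have mmMx: "mm *\<^sub>v (M *\<^sub>v x) = x"
    proof -
      have "mm *\<^sub>v (M *\<^sub>v x) = mm *\<^sub>v (M *\<^sub>v (u *\<^sub>v h))" using xh by simp
      also have "M *\<^sub>v (u *\<^sub>v h) = (M * u) *\<^sub>v h" using M uc hc by (intro mv_assoc, auto)
      also have "mm *\<^sub>v ((M * u) *\<^sub>v h) = (mm * (M * u)) *\<^sub>v h" using mc M uc hc by (intro mv_assoc, auto)
      also have "mm * (M * u) = mm * M * u" using mc M uc by (intro assoc_mult_mat[symmetric, of _ n m _ n _ m], auto)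
      finally show ?thesis using i3 xh by simp
    qed
    have mmV: "\<And>(y :: real vec). y \<in> carrier_vec n \<Longrightarrow> mm *\<^sub>v (V *\<^sub>v y) = mV *\<^sub>v y"
      unfolding mV_def using mc V by (intro mv_assoc, auto)
    define w where "w = mm *\<^sub>v (A *\<^sub>v x)"
    have wc: "w \<in> carrier_vec n" unfolding w_def using mc A xc by auto
    have w0: "\<And>i. i < n \<Longrightarrow> 0 \<le> w $ i"
    proof -
      fix i assume i: "i < n"
      have Ax: "A *\<^sub>v x = U *\<^sub>v x - V *\<^sub>v x" unfolding AUV using U V xc
        by (intro minus_mult_distrib_mat_vec, auto)
      have Uxc: "U *\<^sub>v x \<in> carrier_vec m" using U xc by auto
      have "w = mm *\<^sub>v (U *\<^sub>v x) - mm *\<^sub>v (V *\<^sub>v x)" unfolding w_def Ax using mc Uxc Vxc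
        by (intro mult_minus_distrib_mat_vec, auto)
      also have "mm *\<^sub>v (U *\<^sub>v x) = mm *\<^sub>v h"
      proof -
        have "mm *\<^sub>v (U *\<^sub>v x) = mm *\<^sub>v (U *\<^sub>v (u *\<^sub>v h))" using xh by simp
        also have "U *\<^sub>v (u *\<^sub>v h) = (U * u) *\<^sub>v h" using U uc hc by (intro mv_assoc, auto)
        also have "mm *\<^sub>v ((U * u) *\<^sub>v h) = (mm * (U * u)) *\<^sub>v h" using mc U uc hc by (intro mv_assoc, auto)
        finally show ?thesis using i2 by simp
      qed
      also have "mm *\<^sub>v h = mm *\<^sub>v ((1/s) \<cdot>\<^sub>v (V *\<^sub>v x)) + mm *\<^sub>v f"
        unfolding h_def using mc Vxc fc by (intro mult_add_distrib_mat_vec, auto)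
      also have "mm *\<^sub>v ((1/s) \<cdot>\<^sub>v (V *\<^sub>v x)) = (1/s) \<cdot>\<^sub>v (mV *\<^sub>v x)"
        using mc Vxc mmV[OF xc] by (simp add: mult_mat_vec[of _ n m])
      also have "mm *\<^sub>v f = me - mm *\<^sub>v g" unfolding f_def me_def using mc ec gc
        by (intro mult_minus_distrib_mat_vec, auto)
      also have "mm *\<^sub>v g = (1/s) \<cdot>\<^sub>v (mV *\<^sub>v z K)" unfolding g_def
        using mc VzKc mmV[OF zc] by (simp add: mult_mat_vec[of _ n m])
      also have "mm *\<^sub>v (V *\<^sub>v x) = mV *\<^sub>v x" by (rule mmV[OF xc])
      finally have e2: "w = (1/s) \<cdot>\<^sub>v (mV *\<^sub>v x) + (me - (1/s) \<cdot>\<^sub>v (mV *\<^sub>v z K)) - mV *\<^sub>v x" .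
      have "w $ i = (1/s) * (mV *\<^sub>v x) $ i + (me $ i - (1/s) * (mV *\<^sub>v z K) $ i) - (mV *\<^sub>v x) $ i"
        unfolding e2 using mVc xc zc mec i by simp
      moreover have "0 \<le> (mV *\<^sub>v x) $ i" by (rule nn_mv[OF mVc nmV xc x0 i])
      moreover have "(1/s) * (mV *\<^sub>v x) $ i \<ge> (mV *\<^sub>v x) $ i" using s0 s1 \<open>0 \<le> (mV *\<^sub>v x) $ i\<close>
        by (simp add: field_simps mult_left_le_one_le mult_le_cancel_right1)
      moreover note b2[OF i]
      ultimately show "0 \<le> w $ i" by simp
    qed
    have T2x: "T2 *\<^sub>v x = x - w"
    proof -
      have "T2 *\<^sub>v x = mm *\<^sub>v (N *\<^sub>v x)" unfolding T2_def using mc N xc by (intro mv_assoc[symmetric], auto)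
      also have "N *\<^sub>v x = M *\<^sub>v x - A *\<^sub>v x" unfolding NMA using M A xc
        by (intro minus_mult_distrib_mat_vec, auto)
      also have "mm *\<^sub>v (M *\<^sub>v x - A *\<^sub>v x) = mm *\<^sub>v (M *\<^sub>v x) - mm *\<^sub>v (A *\<^sub>v x)" using mc M A xc
        by (intro mult_minus_distrib_mat_vec, auto)
      finally show ?thesis unfolding mmMx w_def .
    qed
    have T2xc: "T2 *\<^sub>v x \<in> carrier_vec n" using T2c xc by auto
    have Hx: "\<And>i. i < n \<Longrightarrow> ((T1 * T2) *\<^sub>v x) $ i \<le> s * x $ i"
    proof -
      fix i assume i: "i < n"
      have "((T1 * T2) *\<^sub>v x) $ i = (T1 *\<^sub>v (T2 *\<^sub>v x)) $ i" using T1c T2c xc by (subst mv_assoc, auto)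
      also have "\<dots> \<le> (T1 *\<^sub>v x) $ i"
        by (rule mono_mv[OF T1c nT1 T2xc xc _ i], insert w0 xc wc, auto simp: T2x)
      also have "\<dots> \<le> s * x $ i" by (rule T1x[OF i])
      finally show "((T1 * T2) *\<^sub>v x) $ i \<le> s * x $ i" .
    qed
    show ?thesis by (rule rho_ub[OF Hc n nH xc xpos Hx])
  qed
  have "rho (T1 * T2) \<le> r"
  proof (rule ccontr)
    assume "\<not> rho (T1 * T2) \<le> r"
    hence gt: "rho (T1 * T2) > r" by simp
    define s where "s = (r + min (rho (T1 * T2)) 1) / 2"
    have "r < s" "s < 1" "s < rho (T1 * T2)" unfolding s_def using gt r1' by auto
    with key[of s] show False by simp
  qed
  thus ?thesis unfolding Heq r_def T1_def .
qed



lemma nonneg_nnm: "nonneg_mat X \<Longrightarrow> nnm X"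
  unfolding nonneg_mat_def nnm_def by auto

lemma rho_swap:
  fixes X Y :: "real mat"
  assumes X: "X \<in> carrier_mat n n" and Y: "Y \<in> carrier_mat n n" and n: "n > 0"
  shows "rho (X * Y) \<le> rho (Y * X)"
proof (rule rho_le[of _ n])
  show "X * Y \<in> carrier_mat n n" using X Y by auto
  show "n > 0" by fact
  fix l v assume v: "v \<in> carrier_vec n" and v0: "v \<noteq> 0\<^sub>v n"
    and ev: "map_mat complex_of_real (X * Y) *\<^sub>v v = l \<cdot>\<^sub>v v"
  have YXc: "Y * X \<in> carrier_mat n n" using X Y by auto
  show "cmod l \<le> rho (Y * X)"
  proof (cases "l = 0")
    case True thus ?thesis using rho_nonneg[OF YXc n] by simp
  next
    case False
    define cX cY where "cX = map_mat complex_of_real X" and "cY = map_mat complex_of_real Y"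
    have cXc: "cX \<in> carrier_mat n n" and cYc: "cY \<in> carrier_mat n n" unfolding cX_def cY_def using X Y by auto
    have mXY: "map_mat complex_of_real (X * Y) = cX * cY" unfolding cX_def cY_def
      by (rule of_real_hom.mat_hom_mult[OF X Y])
    have mYX: "map_mat complex_of_real (Y * X) = cY * cX" unfolding cX_def cY_def
      by (rule of_real_hom.mat_hom_mult[OF Y X])
    define w where "w = cY *\<^sub>v v"
    have wc: "w \<in> carrier_vec n" unfolding w_def using cYc v by auto
    have e1: "cX *\<^sub>v w = l \<cdot>\<^sub>v v" unfolding w_def using ev mXY cXc cYc v
      by (simp add: assoc_mult_mat_vec[of _ n n _ n])
    have "(cY * cX) *\<^sub>v w = cY *\<^sub>v (cX *\<^sub>v w)" using cXc cYc wc by (simp add: assoc_mult_mat_vec[of _ n n _ n])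
    also have "\<dots> = cY *\<^sub>v (l \<cdot>\<^sub>v v)" using e1 by simp
    also have "\<dots> = l \<cdot>\<^sub>v w" unfolding w_def using cYc v by (rule mult_mat_vec)
    finally have e2: "map_mat complex_of_real (Y * X) *\<^sub>v w = l \<cdot>\<^sub>v w" unfolding mYX .
    have w0: "w \<noteq> 0\<^sub>v n"
    proof
      assume "w = 0\<^sub>v n"
      moreover have "cX *\<^sub>v 0\<^sub>v n = 0\<^sub>v n" using cXc by (intro eq_vecI, auto simp: scalar_prod_def)
      ultimately have "l \<cdot>\<^sub>v v = 0\<^sub>v n" using e1 by simp
      have "v = 0\<^sub>v n"
      proof (rule eq_vecI)
        fix i assume "i < dim_vec (0\<^sub>v n :: complex vec)"
        hence i: "i < n" by simp
        have "(l \<cdot>\<^sub>v v) $ i = 0" using \<open>l \<cdot>\<^sub>v v = 0\<^sub>v n\<close> i by simp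
        hence "l * v $ i = 0" using v i by simp
        thus "v $ i = 0\<^sub>v n $ i" using False i by simp
      qed (insert v, auto)
      with v0 show False by simp
    qed
    have cYX: "map_mat complex_of_real (Y * X) \<in> carrier_mat n n" using YXc by auto
    have "eigenvector (map_mat complex_of_real (Y * X)) w l"
      unfolding eigenvector_def using wc w0 e2 cYX by auto
    hence "cmod l \<in> norm ` spectrum (map_mat complex_of_real (Y * X))"
      unfolding spectrum_def eigenvalue_def by auto
    from spectral_radius_mem_max(2)[OF cYX n this] show ?thesis unfolding rho_def .
  qed
qed

lemma split_rho_lt1:
  fixes A U V :: "real mat"
  assumes A: "A \<in> carrier_mat m n" and U: "U \<in> carrier_mat m n" and V: "V \<in> carrier_mat m n"
    and AUV: "A = U - V" and n: "n > 0"
    and pa: "penrose A a" and pu: "penrose U u"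
    and Q: "U * u = A * a" and P: "u * U = a * A"
    and na: "nnm a" and nu: "nnm u" and nV: "nnm V"
  shows "rho (u * V) < 1"
proof -
  from pa A have ac: "a \<in> carrier_mat n m" and aAa: "a * A * a = a" unfolding penrose_def by auto
  from pu U have uc: "u \<in> carrier_mat n m" and uUu: "u * U * u = u" unfolding penrose_def by auto
  define T G where "T = u * V" and "G = a * V"
  have Tc: "T \<in> carrier_mat n n" and Gc: "G \<in> carrier_mat n n" unfolding T_def G_def using uc ac V by auto
  have nT: "nnm T" unfolding T_def by (rule nnm_mult[OF nu nV], insert uc V, auto)
  have nG: "nnm G" unfolding G_def by (rule nnm_mult[OF na nV], insert ac V, auto)
  have d: "dim_row A = m" "dim_col A = n" "dim_row U = m" "dim_col U = n" "dim_row V = m" "dim_col V = n"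
    "dim_row a = n" "dim_col a = m" "dim_row u = n" "dim_col u = m" using A U V ac uc by auto
  have aUu: "a * (U * u) = a" using Q aAa d by (simp add: assoc_dim)
  have aAu: "a * A * u = u" using P[symmetric] uUu by simp
  have "a * V * u = a * U * u - a * A * u"
  proof -
    have V': "V = U - A" using AUV A U V by (intro eq_matI, auto)
    have "a * V = a * U - a * A" unfolding V' using ac U A by (intro mult_minus_distrib_mat, auto)
    thus ?thesis using ac U A uc by (simp add: minus_mult_distrib_mat[of _ n n _ _ m])
  qed
  also have "a * U * u = a" using aUu d by (simp add: assoc_dim)
  finally have aVu: "a * V * u = a - u" using aAu by simp
  have "G * T = (a - u) * V" unfolding G_def T_def using aVu d by (simp add: assoc_dim[symmetric])
  also have "\<dots> = G - T" unfolding G_def T_def using ac uc V by (intro minus_mult_distrib_mat, auto)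
  finally have "G * T = G - T" .
  hence "G = T + G * T" using Gc Tc by (intro eq_matI, auto)
  thus ?thesis using rho_lt1[OF Tc Gc n nT nG] unfolding T_def by simp
qed



theorem theorem4p9:
  fixes A M N U V :: "real mat" and m n :: nat
  assumes "A \<in> carrier_mat m n"
    and "semi_monotone A"
    and "proper_regular_splitting A M N"
    and "proper_regular_splitting A U V"
    and "range_mat (M + U - A) = range_mat A"
    and "null_mat (M + U - A) = null_mat A"
    and "pos_row_sums (pinv U)"
    and "pos_row_sums (pinv M)"
  shows "rho (pinv U * V * pinv M * N) \<le> min (rho (pinv U * V)) (rho (pinv M * N))
         \<and> min (rho (pinv U * V)) (rho (pinv M * N)) < 1"
proof -
  note A = assms(1)
  from assms(3) A have M: "M \<in> carrier_mat m n" and N: "N \<in> carrier_mat m n" and AMN: "A = M - N"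
    and RM: "range_mat M = range_mat A" and NM: "null_mat M = null_mat A"
    and nmm: "nonneg_mat (pinv M)" and nN: "nonneg_mat N"
    unfolding proper_regular_splitting_def proper_splitting_def by auto
  from assms(4) A have U: "U \<in> carrier_mat m n" and V: "V \<in> carrier_mat m n" and AUV: "A = U - V"
    and RU: "range_mat U = range_mat A" and NU: "null_mat U = null_mat A"
    and nu: "nonneg_mat (pinv U)" and nV: "nonneg_mat V"
    unfolding proper_regular_splitting_def proper_splitting_def by auto
  define a u mm where "a = pinv A" and "u = pinv U" and "mm = pinv M"
  have pa: "penrose A a" unfolding a_def by (rule pinv_penrose[OF A])
  have pu: "penrose U u" unfolding u_def by (rule pinv_penrose[OF U])
  have pm: "penrose M mm" unfolding mm_def by (rule pinv_penrose[OF M])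
  have ac: "a \<in> carrier_mat n m" using pa A unfolding penrose_def by auto
  have uc: "u \<in> carrier_mat n m" using pu U unfolding penrose_def by auto
  have mc: "mm \<in> carrier_mat n m" using pm M unfolding penrose_def by auto
  have na: "nonneg_mat a" using assms(2) unfolding semi_monotone_def a_def .
  have n: "n > 0" using na ac unfolding nonneg_mat_def by auto
  have Q1: "U * u = A * a" unfolding u_def a_def by (rule range_proj_eq[OF A U RU])
  have Q2: "M * mm = A * a" unfolding mm_def a_def by (rule range_proj_eq[OF A M RM])
  have P1: "u * U = a * A" unfolding u_def a_def by (rule null_proj_eq[OF A U NU])
  have P2: "mm * M = a * A" unfolding mm_def a_def by (rule null_proj_eq[OF A M NM])
  have uUu: "u * U * u = u" using pu unfolding penrose_def by auto
  have mMm: "mm * M * mm = mm" using pm unfolding penrose_def by auto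
  have d: "dim_row A = m" "dim_col A = n" "dim_row U = m" "dim_col U = n" "dim_row M = m" "dim_col M = n"
    "dim_row u = n" "dim_col u = m" "dim_row mm = n" "dim_col mm = m" using A U M uc mc by auto
  have NMA: "N = M - A" using AMN A M N by (intro eq_matI, auto)
  have VUA: "V = U - A" using AUV A U V by (intro eq_matI, auto)
  have nnu: "nnm u" and nnmm: "nnm mm" and nna: "nnm a" and nnV: "nnm V" and nnN: "nnm N"
    using nu nmm na nV nN unfolding u_def mm_def by (auto intro: nonneg_nnm)
  have ru: "\<And>i. i < n \<Longrightarrow> 0 < (\<Sum>j<m. u $$ (i,j))"
    using assms(7) uc unfolding pos_row_sums_def u_def[symmetric] by auto
  have rm: "\<And>i. i < n \<Longrightarrow> 0 < (\<Sum>j<m. mm $$ (i,j))"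
    using assms(8) mc unfolding pos_row_sums_def mm_def[symmetric] by auto
  have r1: "rho (u * V) < 1" by (rule split_rho_lt1[OF A U V AUV n pa pu Q1 P1 nna nnu nnV])
  have r2: "rho (mm * N) < 1" by (rule split_rho_lt1[OF A M N AMN n pa pm Q2 P2 nna nnmm nnN])
  have i2: "mm * (U * u) = mm" using Q1 Q2 mMm d by (simp add: assoc_dim)
  have i3: "mm * M * u = u" using P1 P2 uUu by simp
  have i2': "u * (M * mm) = u" using Q1 Q2 uUu d by (simp add: assoc_dim)
  have i3': "u * U * mm = mm" using P1 P2 mMm by simp
  have c1: "rho (u * V * mm * N) \<le> rho (u * V)"
    by (rule core_cmp[OF A U V M N uc mc AUV NMA i2 i3 nnu nnV nnmm nnN ru rm n r1])
  have c2: "rho (mm * N * u * V) \<le> rho (mm * N)"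
    by (rule core_cmp[OF A M N U V mc uc AMN VUA i2' i3' nnmm nnN nnu nnV rm ru n r2])
  have Tc1: "u * V \<in> carrier_mat n n" using uc V by auto
  have Tc2: "mm * N \<in> carrier_mat n n" using mc N by auto
  have e1: "u * V * mm * N = (u * V) * (mm * N)"
    by (rule assoc_mult_mat[of _ n n _ m _ n], insert uc V mc N, auto)
  have e2: "mm * N * u * V = (mm * N) * (u * V)"
    by (rule assoc_mult_mat[of _ n n _ m _ n], insert uc V mc N, auto)
  have sw: "rho ((u * V) * (mm * N)) \<le> rho ((mm * N) * (u * V))" by (rule rho_swap[OF Tc1 Tc2 n])
  have "rho (u * V * mm * N) \<le> rho (mm * N)" using c2 sw unfolding e1 e2 by simp
  with c1 have "rho (u * V * mm * N) \<le> min (rho (u * V)) (rho (mm * N))" by simp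
  moreover have "min (rho (u * V)) (rho (mm * N)) < 1" using r1 by simp
  ultimately show ?thesis unfolding u_def mm_def by simp
qed


end
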